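(* Let $n$ be a positive integer, $b_0,\dots,b_{n-1},\beta_0,\dots,\beta_{n-1}\in\mathbb R$, and \[ \widetilde\Delta(z)=z^n+\sum_{k=0}^{n-1}b_kz^k+e^{-z}\sum_{k=0}^{n-1}\beta_kz^k,\quad z\in\mathbb C. \] Then $0$ is a root of multiplicity $2n$ of $\widetilde\Delta$ if and only if, for every $k\in\{0,\dots,n-1\}$, \[ b_k=(-1)^{n-k}\frac{n!}{k!}\binom{2n-k-1}{n-1},\qquad \beta_k=(-1)^{n-1}\frac{(2n-k-1)!}{k!\,(n-k-1)!}. \]
   Context: A root $z_0$ of $\widetilde\Delta$ has multiplicity $2n$ when $\widetilde\Delta^{(k)}(z_0)=0$ for $k=0,\dots,2n-1$ (multiplicity can be at most $2n$ for this quasipolynomial). *)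

theory Defs
  imports "HOL-Complex_Analysis.Complex_Analysis"
begin

definition Delta_tilde :: "nat \<Rightarrow> (nat \<Rightarrow> real) \<Rightarrow> (nat \<Rightarrow> real) \<Rightarrow> complex \<Rightarrow> complex" where
  "Delta_tilde n b \<beta> z = z ^ n + (\<Sum>k<n. complex_of_real (b k) * z ^ k)
      + exp (- z) * (\<Sum>k<n. complex_of_real (\<beta> k) * z ^ k)"

definition root_of_mult :: "(complex \<Rightarrow> complex) \<Rightarrow> complex \<Rightarrow> nat \<Rightarrow> bool" where
  "root_of_mult f z0 m \<longleftrightarrow> (\<forall>k<m. (deriv ^^ k) f z0 = 0)"

end

theory Submission
  imports Defs
begin

definition Lop :: "'a::field_char_0 fps \<Rightarrow> 'a fps" where "Lop F = fps_deriv F + F"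

lemma trunc_mult:
  fixes G H :: "'a::field_char_0 fps"
  assumes "\<forall>m<N. G$m = 0" "m < N"
  shows "(H*G)$m = 0"
  unfolding fps_mult_nth using assms by (intro sum.neutral) auto

lemma iter_deriv_nth:
  fixes f :: "'a::field_char_0 fps"
  shows "((fps_deriv^^k) f) $ j = (fact (j+k) / fact j) * f$(j+k)"
proof (induction k arbitrary: j)
  case 0 then show ?case by simp
next
  case (Suc k)
  have "((fps_deriv^^Suc k) f) $ j = of_nat (j+1) * ((fps_deriv^^k) f) $ (j+1)" by simp
  also have "\<dots> = of_nat (j+1) * ((fact (j+1+k) / fact (j+1)) * f$(j+1+k))" by (simp only: Suc)
  also have "\<dots> = (fact (j+Suc k) / fact j) * f$(j+Suc k)"
    by (simp add: fact_Suc field_simps del: of_nat_Suc)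
  finally show ?case .
qed

lemma deriv_exp_mult:
  fixes F :: "'a::field_char_0 fps"
  shows "(fps_deriv^^k) (fps_exp 1 * F) = fps_exp 1 * (Lop^^k) F"
proof (induction k)
  case 0 then show ?case by simp
next
  case (Suc k)
  then show ?case by (simp add: fps_deriv_mult Lop_def algebra_simps)
qed

lemma Lop_deg:
  fixes F :: "'a::field_char_0 fps"
  assumes "\<forall>m>d. F$m = 0"
  shows "(\<forall>m>d. ((Lop^^k) F)$m = 0) \<and> ((Lop^^k) F)$d = F$d"
proof (induction k)
  case 0 then show ?case using assms by simp
next
  case (Suc k)
  then show ?case by (auto simp: Lop_def)
qed

lemma uniq:
  fixes G :: "'a::field_char_0 fps"
  assumes hi: "\<forall>m\<ge>n. G$m = 0"
    and rng: "\<forall>m. n \<le> m \<and> m < 2*n \<longrightarrow> (fps_exp 1 * G)$m = 0"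
  shows "G = 0"
proof -
  have d: "\<forall>j<n. ((fps_deriv^^n) (fps_exp 1 * G))$j = 0"
    using rng by (auto simp: iter_deriv_nth)
  have "(Lop^^n) G = fps_exp (-1) * (fps_exp 1 * (Lop^^n) G)"
    by (simp add: mult.assoc[symmetric] fps_exp_add_mult[symmetric])
  also have "\<dots> = fps_exp (-1) * ((fps_deriv^^n) (fps_exp 1 * G))"
    by (simp add: deriv_exp_mult)
  finally have L: "\<forall>j<n. ((Lop^^n) G)$j = 0"
    using trunc_mult[OF d] by metis
  have "\<forall>m. m \<ge> n - i \<longrightarrow> G$m = 0" for i
  proof (induction i)
    case 0 then show ?case using hi by simp
  next
    case (Suc i)
    show ?case
    proof (intro allI impI)
      fix m assume m: "m \<ge> n - Suc i"
      show "G$m = 0"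
      proof (cases "m \<ge> n - i")
        case True then show ?thesis using Suc by auto
      next
        case False
        then have "\<forall>m'>m. G$m' = 0"
        proof (intro allI impI)
          fix m' assume "m' > m"
          then have "m' \<ge> n - i" using m False by linarith
          then show "G$m' = 0" using Suc by auto
        qed
        from Lop_deg[OF this, of n] have "((Lop^^n) G)$m = G$m" by blast
        moreover have "m < n" using False by auto
        ultimately show ?thesis using L by auto
      qed
    qed
  qed
  then have "\<forall>m. G$m = 0" by (metis diff_self_eq_0 le0)
  then show ?thesis by (simp add: fps_ext)
qed

definition pp0 :: "nat \<Rightarrow> nat \<Rightarrow> 'a::field_char_0" where
  "pp0 n k = (if k \<le> n then fact n / fact k * ((- of_nat n) gchoose (n-k)) else 0)"

definition S0 :: "nat \<Rightarrow> nat \<Rightarrow> 'a::field_char_0" where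
  "S0 n m = (fact n / fact m) * ((of_nat m - of_nat n) gchoose n)"

lemma sum_ext_zero:
  fixes h :: "nat \<Rightarrow> 'a::comm_monoid_add"
  assumes "\<forall>i>a. h i = 0" "a \<le> b"
  shows "sum h {0..b} = sum h {0..a}"
  using assms by (intro sum.mono_neutral_right) auto

lemma aux_field:
  fixes a b c d g :: "'a::field"
  assumes "d \<noteq> 0"
  shows "a / b * g * (1 / c) = a / d * (d / (b * c) * g * 1)"
  using assms by (simp add: field_simps)

lemma verif:
  "(fps_exp 1 * Abs_fps (pp0 n)) $ m = (S0 n m :: 'a::field_char_0)"
proof -
  define h :: "nat \<Rightarrow> 'a" where
    "h i = (of_nat m gchoose i) * ((- of_nat n) gchoose (n-i)) * (if i \<le> n then 1 else 0)" for i
  have "(fps_exp 1 * Abs_fps (pp0 n)) $ m = (Abs_fps (pp0 n) * fps_exp 1) $ m"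
    by (subst mult.commute) (rule refl)
  also have "\<dots> = (\<Sum>i=0..m. pp0 n i * (1 / fact (m - i)))"
    by (simp add: fps_mult_nth fps_exp_def)
  also have "\<dots> = (\<Sum>i=0..m. (fact n / fact m) * h i)"
  proof (intro sum.cong refl)
    fix i assume i: "i \<in> {0..m}"
    have c: "(of_nat m gchoose i :: 'a) = fact m / (fact i * fact (m - i))"
      using i by (simp add: binomial_gbinomial[symmetric] binomial_fact)
    show "pp0 n i * (1 / fact (m - i)) = (fact n / fact m) * h i"
    proof (cases "i \<le> n")
      case True
      have 1: "pp0 n i = fact n / fact i * ((- of_nat n) gchoose (n-i))" using True by (simp only: pp0_def if_True)
      have 2: "h i = fact m / (fact i * fact (m - i)) * ((- of_nat n) gchoose (n-i)) * 1"
        using True by (simp only: h_def c if_True)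
      show ?thesis unfolding 1 2 by (rule aux_field[OF fact_nonzero])
    next
      case False
      show ?thesis unfolding h_def pp0_def c if_not_P[OF False] by (simp only: mult_zero_right mult_zero_left)
    qed
  qed
  also have "\<dots> = (fact n / fact m) * (\<Sum>i=0..m. h i)"
    by (rule sum_distrib_left[symmetric])
  also have "(\<Sum>i=0..m. h i) = (\<Sum>i=0..n. h i)"
  proof -
    have hz: "\<forall>i>m. h i = 0" "\<forall>i>n. h i = 0"
      by (auto simp: h_def binomial_gbinomial[symmetric])
    have "(\<Sum>i=0..m. h i) = (\<Sum>i=0..m+n. h i)" by (rule sum_ext_zero[OF hz(1) le_add1, symmetric])
    also have "\<dots> = (\<Sum>i=0..n. h i)" by (rule sum_ext_zero[OF hz(2) le_add2])
    finally show ?thesis .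
  qed
  also have "(\<Sum>i=0..n. h i) = (\<Sum>i=0..n. (of_nat m gchoose i) * ((- of_nat n) gchoose (n-i)))"
  proof (rule sum.cong[OF refl])
    fix i assume "i \<in> {0..n}"
    then have "i \<le> n" by simp
    then show "h i = (of_nat m gchoose i) * ((- of_nat n) gchoose (n-i))"
      by (simp only: h_def if_P mult_1_right)
  qed
  also have "\<dots> = (of_nat m - of_nat n) gchoose n"
    by (simp add: gbinomial_Vandermonde)
  finally show ?thesis by (simp add: S0_def)
qed

lemma pp0_n: "pp0 n n = (1::'a::field_char_0)"
  by (simp add: pp0_def)

lemma pp0_gt: "m > n \<Longrightarrow> pp0 n m = (0::'a::field_char_0)"
  by (simp add: pp0_def)

lemma S0_zero:
  assumes "n \<le> m" "m < 2*n"
  shows "S0 n m = (0::'a::field_char_0)"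
proof -
  have "(of_nat m - of_nat n :: 'a) = of_nat (m - n)" using assms(1) by (simp add: of_nat_diff)
  then have "((of_nat m - of_nat n :: 'a) gchoose n) = of_nat ((m - n) choose n)"
    by (simp add: binomial_gbinomial)
  also have "(m - n) choose n = 0" using assms by (intro binomial_eq_0) linarith
  finally show ?thesis by (simp add: S0_def)
qed

lemma main_alg:
  fixes pp qq :: "nat \<Rightarrow> 'a::field_char_0"
  assumes pn: "pp n = 1" and pgt: "\<forall>m>n. pp m = 0" and qge: "\<forall>m\<ge>n. qq m = 0"
  shows "(\<forall>m<2*n. (Abs_fps pp + fps_exp (-1) * Abs_fps qq)$m = 0) \<longleftrightarrow>
         (\<forall>k<n. pp k = pp0 n k \<and> qq k = - S0 n k)"
proof -
  define P where "P = Abs_fps pp"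
  define Q where "Q = Abs_fps qq"
  define R where "R = fps_exp 1 * P + Q"
  have ee: "fps_exp (1::'a) * fps_exp (-1) = 1"
    by (simp add: fps_exp_add_mult[symmetric])
  have R1: "fps_exp 1 * (P + fps_exp (-1) * Q) = R"
    unfolding R_def by (simp add: distrib_left mult.assoc[symmetric] ee)
  have R2: "P + fps_exp (-1) * Q = fps_exp (-1) * R"
    unfolding R1[symmetric] by (simp add: mult.assoc[symmetric] ee mult.commute[of "fps_exp (-1)"])
  have iff1: "(\<forall>m<2*n. (P + fps_exp (-1) * Q)$m = 0) \<longleftrightarrow> (\<forall>m<2*n. R$m = 0)"
  proof
    assume h: "\<forall>m<2*n. (P + fps_exp (-1) * Q)$m = 0"
    show "\<forall>m<2*n. R$m = 0" unfolding R1[symmetric] using trunc_mult[OF h] by blast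
  next
    assume h: "\<forall>m<2*n. R$m = 0"
    show "\<forall>m<2*n. (P + fps_exp (-1) * Q)$m = 0" unfolding R2 using trunc_mult[OF h] by blast
  qed
  have Rnth: "R$m = (fps_exp 1 * P)$m + qq m" for m
    unfolding R_def Q_def by simp
  have pp0_all: "pp = pp0 n" if h: "\<forall>k<n. pp k = pp0 n k"
  proof
    fix k show "pp k = pp0 n k"
    proof (cases "k < n")
      case True then show ?thesis using h by blast
    next
      case False
      then consider "k = n" | "k > n" by linarith
      then show ?thesis
      proof cases
        case 1 then show ?thesis using pn pp0_n by simp
      next
        case 2 then show ?thesis using pgt pp0_gt by metis
      qed
    qed
  qed
  show ?thesis
    unfolding P_def[symmetric] Q_def[symmetric] iff1
  proof
    assume h: "\<forall>m<2*n. R$m = 0"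
    define G where "G = P - Abs_fps (pp0 n)"
    have Ghi: "\<forall>m\<ge>n. G$m = 0"
    proof (intro allI impI)
      fix m assume "n \<le> m"
      then consider "m = n" | "m > n" by linarith
      then show "G$m = 0"
      proof cases
        case 1 then show ?thesis unfolding G_def P_def using pn pp0_n by simp
      next
        case 2 then show ?thesis unfolding G_def P_def using pgt pp0_gt by simp
      qed
    qed
    have Grng: "\<forall>m. n \<le> m \<and> m < 2*n \<longrightarrow> (fps_exp 1 * G)$m = 0"
    proof (intro allI impI)
      fix m assume m: "n \<le> m \<and> m < 2*n"
      have "(fps_exp 1 * P)$m = 0" using h Rnth[of m] qge m by simp
      moreover have "(fps_exp 1 * Abs_fps (pp0 n))$m = (0::'a)" using verif S0_zero m by metis
      ultimately show "(fps_exp 1 * G)$m = 0" unfolding G_def by (simp add: right_diff_distrib)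
    qed
    have "G = 0" by (rule uniq[OF Ghi Grng])
    then have PP: "P = Abs_fps (pp0 n)" unfolding G_def by simp
    show "\<forall>k<n. pp k = pp0 n k \<and> qq k = - S0 n k"
    proof (intro allI impI conjI)
      fix k assume k: "k < n"
      show "pp k = pp0 n k" using PP unfolding P_def by (metis fps_nth_Abs_fps)
      have "R$k = 0" using h k by simp
      then have "qq k = - (fps_exp 1 * P)$k" using Rnth[of k] by (simp add: eq_neg_iff_add_eq_0 add.commute)
      moreover have "(fps_exp 1 * P)$k = S0 n k" unfolding PP by (rule verif)
      ultimately show "qq k = - S0 n k" by simp
    qed
  next
    assume h: "\<forall>k<n. pp k = pp0 n k \<and> qq k = - S0 n k"
    then have "pp = pp0 n" using pp0_all by blast
    then have PS: "(fps_exp 1 * P)$m = S0 n m" for m unfolding P_def using verif by metis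
    show "\<forall>m<2*n. R$m = 0"
    proof (intro allI impI)
      fix m assume m: "m < 2*n"
      show "R$m = 0"
      proof (cases "m < n")
        case True then show ?thesis using h Rnth PS by simp
      next
        case False
        then have "S0 n m = (0::'a)" using m by (intro S0_zero) auto
        then show ?thesis using Rnth PS qge False by simp
      qed
    qed
  qed
qed

lemma F1:
  assumes "n > 0" "k < n"
  shows "pp0 n k = ((-1) ^ (n - k) * (fact n / fact k) * of_nat ((2 * n - k - 1) choose (n - 1)) :: 'a::field_char_0)"
proof -
  have "((- of_nat n :: 'a) gchoose (n-k)) = (-1)^(n-k) * ((of_nat (n-k) - (- of_nat n) - 1) gchoose (n-k))"
    by (rule gbinomial_negated_upper)
  also have "(of_nat (n-k) - (- of_nat n) - 1 :: 'a) = of_nat (2*n-k-1)"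
    using assms by (simp add: of_nat_diff)
  also have "(of_nat (2*n-k-1) gchoose (n-k) :: 'a) = of_nat ((2*n-k-1) choose (n-k))"
    by (simp add: binomial_gbinomial)
  also have "(2*n-k-1) choose (n-k) = (2*n-k-1) choose (n-1)"
  proof -
    have "(2*n-k-1) choose (n-1) = (2*n-k-1) choose ((2*n-k-1) - (n-1))"
      using assms by (intro binomial_symmetric) linarith
    also have "(2*n-k-1) - (n-1) = n - k" using assms by linarith
    finally show ?thesis by simp
  qed
  finally show ?thesis using assms by (simp add: pp0_def)
qed

lemma F2:
  assumes "n > 0" "k < n"
  shows "- S0 n k = ((-1) ^ (n - 1) * fact (2 * n - k - 1) / (fact k * fact (n - k - 1)) :: 'a::field_char_0)"
proof -
  have "((of_nat k - of_nat n :: 'a) gchoose n) = (-1)^n * ((of_nat n - (of_nat k - of_nat n) - 1) gchoose n)"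
    by (rule gbinomial_negated_upper)
  also have "(of_nat n - (of_nat k - of_nat n) - 1 :: 'a) = of_nat (2*n-k-1)"
    using assms by (simp add: of_nat_diff)
  also have "(of_nat (2*n-k-1) gchoose n :: 'a) = of_nat ((2*n-k-1) choose n)"
    by (simp add: binomial_gbinomial)
  also have "(of_nat ((2*n-k-1) choose n) :: 'a) = fact (2*n-k-1) / (fact n * fact (n-k-1))"
  proof -
    have "n \<le> 2*n-k-1" "2*n-k-1-n = n-k-1" using assms by linarith+
    then show ?thesis by (simp add: binomial_fact)
  qed
  finally have e: "((of_nat k - of_nat n :: 'a) gchoose n) = (-1)^n * (fact (2*n-k-1) / (fact n * fact (n-k-1)))" .
  have m: "(-1::'a)^n = - ((-1)^(n-1))" using assms by (cases n) auto
  show ?thesis unfolding S0_def e m by (simp add: field_simps)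
qed

lemma poly_fps_eq:
  "(\<Sum>k<n. fps_const (c k) * fps_X ^ k) = Abs_fps (\<lambda>m. if m < n then c m else (0::'a::comm_ring_1))"
proof (rule fps_ext)
  fix m
  have "(\<Sum>k<n. fps_const (c k) * fps_X ^ k) $ m = (\<Sum>k<n. (if m = k then c k else 0))"
    unfolding fps_sum_nth by (intro sum.cong refl) (simp add: fps_X_power_iff)
  also have "\<dots> = (if m < n then c m else 0)" by (simp add: sum.delta)
  finally show "(\<Sum>k<n. fps_const (c k) * fps_X ^ k) $ m = Abs_fps (\<lambda>m. if m < n then c m else 0) $ m" by simp
qed

lemma Xn_fps: "(fps_X ^ n :: 'a::comm_ring_1 fps) = Abs_fps (\<lambda>m. if m = n then 1 else 0)"
  by (rule fps_ext) (simp add: fps_X_power_iff)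

theorem lemma4p3:
  fixes n :: nat and b \<beta> :: "nat \<Rightarrow> real"
  assumes "n > 0"
  shows "root_of_mult (Delta_tilde n b \<beta>) 0 (2 * n) \<longleftrightarrow>
    (\<forall>k<n. b k = (-1) ^ (n - k) * (fact n / fact k) * real ((2 * n - k - 1) choose (n - 1))
          \<and> \<beta> k = (-1) ^ (n - 1) * fact (2 * n - k - 1) / (fact k * fact (n - k - 1)))"
proof -
  define pp :: "nat \<Rightarrow> complex" where "pp m = (if m = n then 1 else if m < n then of_real (b m) else 0)" for m
  define qq :: "nat \<Rightarrow> complex" where "qq m = (if m < n then of_real (\<beta> m) else 0)" for m
  define F where "F = Abs_fps pp + fps_exp (-1) * Abs_fps qq"
  have "Delta_tilde n b \<beta> has_fps_expansion
      (fps_X ^ n + (\<Sum>k<n. fps_const (complex_of_real (b k)) * fps_X ^ k)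
       + fps_exp (-1) * (\<Sum>k<n. fps_const (complex_of_real (\<beta> k)) * fps_X ^ k))"
    unfolding Delta_tilde_def[abs_def] by (intro fps_expansion_intros)
  also have "fps_X ^ n + (\<Sum>k<n. fps_const (complex_of_real (b k)) * fps_X ^ k) = Abs_fps pp"
    unfolding poly_fps_eq unfolding Xn_fps by (rule fps_ext) (simp add: pp_def)
  also have "(\<Sum>k<n. fps_const (complex_of_real (\<beta> k)) * fps_X ^ k) = Abs_fps qq"
    unfolding poly_fps_eq qq_def by simp
  finally have exp: "Delta_tilde n b \<beta> has_fps_expansion F" unfolding F_def .
  have "root_of_mult (Delta_tilde n b \<beta>) 0 (2 * n) \<longleftrightarrow> (\<forall>m<2*n. F$m = 0)"
    unfolding root_of_mult_def fps_nth_fps_expansion[OF exp] by simp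
  also have "\<dots> \<longleftrightarrow> (\<forall>k<n. pp k = pp0 n k \<and> qq k = - S0 n k)"
    unfolding F_def by (rule main_alg) (auto simp: pp_def qq_def)
  also have "\<dots> \<longleftrightarrow> (\<forall>k<n. b k = (-1) ^ (n - k) * (fact n / fact k) * real ((2 * n - k - 1) choose (n - 1))
          \<and> \<beta> k = (-1) ^ (n - 1) * fact (2 * n - k - 1) / (fact k * fact (n - k - 1)))"
  proof (intro all_cong1 imp_cong refl conj_cong)
    fix k assume k: "k < n"
    have "pp k = pp0 n k \<longleftrightarrow> complex_of_real (b k) = complex_of_real ((-1) ^ (n - k) * (fact n / fact k) * real ((2 * n - k - 1) choose (n - 1)))"
      unfolding F1[OF assms k] using k by (simp add: pp_def)
    then show "pp k = pp0 n k \<longleftrightarrow> b k = (-1) ^ (n - k) * (fact n / fact k) * real ((2 * n - k - 1) choose (n - 1))"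
      by (simp only: of_real_eq_iff)
    have "qq k = - S0 n k \<longleftrightarrow> complex_of_real (\<beta> k) = complex_of_real ((-1) ^ (n - 1) * fact (2 * n - k - 1) / (fact k * fact (n - k - 1)))"
      unfolding F2[OF assms k] using k by (simp add: qq_def)
    then show "qq k = - S0 n k \<longleftrightarrow> \<beta> k = (-1) ^ (n - 1) * fact (2 * n - k - 1) / (fact k * fact (n - k - 1))"
      by (simp only: of_real_eq_iff)
  qed
  finally show ?thesis .
qed

end
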